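(* Let $\mathcal{A}\subset\mathbb{R}^d$ be a finite set and $\mathcal{X}=\{x_1,\dots,x_K\}\subset\mathbb{R}^d$. Let $\tilde{\mathbf p}\in\Delta^{(K)}$ be a minimizer of $\mathbf p\mapsto\max_{u,u'\in\mathcal{A}}\|u-u'\|^2_{\mathbf\Sigma_{-1,\mathbf p}^{-1}}$ over $\Delta^{(K)}$ with $\tilde p_1=0$, and define $\mathbf p_{\mathrm{xor}}(\mathcal{A}):=(\tfrac12,\tfrac12\tilde p_2,\dots,\tfrac12\tilde p_K)\in\Delta^{(K)}$. Then $$\mathcal{V}_{\mathrm{cov}}(\mathcal{A}:\mathcal{X},\mathbf p_{\mathrm{xor}}(\mathcal{A}))\le 4\,\mathcal{V}^\star_{\mathrm{lin}}(\mathcal{A}:\mathcal{X}-x_1).$$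
   Context: $\Delta^{(K)}$ is the probability simplex on $[K]$. For $\mathbf p\in\Delta^{(K)}$: $\bar x_{\mathbf p}:=\sum_ip_ix_i$, $\mathbf\Sigma_{\mathrm{cov},\mathbf p}:=\sum_{i=1}^Kp_i(x_i-\bar x_{\mathbf p})(x_i-\bar x_{\mathbf p})^\top$, and $\mathbf\Sigma_{-1,\mathbf p}:=\sum_{i=1}^Kp_i(x_i-x_1)(x_i-x_1)^\top$. For PSD $\mathbf A$, $\|x\|_{\mathbf A^{-1}}:=\lim_{\lambda\to0^+}\sqrt{x^\top(\mathbf A+\lambda\mathbf I_d)^{-1}x}$ (possibly $+\infty$). Define $\mathcal{V}_{\mathrm{cov}}(\mathcal{A}:\mathcal{X},\mathbf p):=\max_{u,u'\in\mathcal{A}}\|u-u'\|^2_{\mathbf\Sigma_{\mathrm{cov},\mathbf p}^{-1}}$ and $\mathcal{V}^\star_{\mathrm{lin}}(\mathcal{A}:\mathcal{X}-x_1):=\min_{\mathbf p\in\Delta^{(K)}}\max_{u,u'\in\mathcal{A}}\|u-u'\|^2_{\mathbf\Sigma_{-1,\mathbf p}^{-1}}$. (A minimizer with $\tilde p_1=0$ exists since the term $i=1$ contributes zero to $\mathbf\Sigma_{-1,\mathbf p}$.) *)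

theory Defs
  imports "HOL-Analysis.Analysis"
begin

text \<open>Vectors in R^d are modelled as real^'d; the points are indexed x 1, ..., x K.\<close>

definition outer :: "real^'d \<Rightarrow> real^'d^'d" where
  "outer v = (\<chi> i j. v $ i * v $ j)"

definition prob_simplex :: "nat \<Rightarrow> (nat \<Rightarrow> real) set" where
  "prob_simplex K = {p. (\<forall>i\<in>{1..K}. 0 \<le> p i) \<and> (\<Sum>i=1..K. p i) = 1}"

definition xbar :: "nat \<Rightarrow> (nat \<Rightarrow> real^'d) \<Rightarrow> (nat \<Rightarrow> real) \<Rightarrow> real^'d" where
  "xbar K x p = (\<Sum>i=1..K. p i *\<^sub>R x i)"

definition Sigma_cov :: "nat \<Rightarrow> (nat \<Rightarrow> real^'d) \<Rightarrow> (nat \<Rightarrow> real) \<Rightarrow> real^'d^'d" where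
  "Sigma_cov K x p = (\<Sum>i=1..K. p i *\<^sub>R outer (x i - xbar K x p))"

definition Sigma_m1 :: "nat \<Rightarrow> (nat \<Rightarrow> real^'d) \<Rightarrow> (nat \<Rightarrow> real) \<Rightarrow> real^'d^'d" where
  "Sigma_m1 K x p = (\<Sum>i=1..K. p i *\<^sub>R outer (x i - x 1))"

definition norm_inv :: "real^'d^'d \<Rightarrow> real^'d \<Rightarrow> ereal" where
  "norm_inv A v = Lim (at_right 0)
     (\<lambda>l::real. ereal (sqrt (v \<bullet> (matrix_inv (A + l *\<^sub>R mat 1) *v v))))"

definition V_cov :: "(real^'d) set \<Rightarrow> nat \<Rightarrow> (nat \<Rightarrow> real^'d) \<Rightarrow> (nat \<Rightarrow> real) \<Rightarrow> ereal" where
  "V_cov A K x p = (SUP uu\<in>A \<times> A. (norm_inv (Sigma_cov K x p) (fst uu - snd uu))^2)"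

definition V_lin_obj :: "(real^'d) set \<Rightarrow> nat \<Rightarrow> (nat \<Rightarrow> real^'d) \<Rightarrow> (nat \<Rightarrow> real) \<Rightarrow> ereal" where
  "V_lin_obj A K x p = (SUP uu\<in>A \<times> A. (norm_inv (Sigma_m1 K x p) (fst uu - snd uu))^2)"

definition V_lin_star :: "(real^'d) set \<Rightarrow> nat \<Rightarrow> (nat \<Rightarrow> real^'d) \<Rightarrow> ereal" where
  "V_lin_star A K x = (INF p\<in>prob_simplex K. V_lin_obj A K x p)"

definition p_xor :: "(nat \<Rightarrow> real) \<Rightarrow> nat \<Rightarrow> real" where
  "p_xor pt = (\<lambda>i. if i = 1 then 1/2 else pt i / 2)"

end

theory Submission imports Defs begin

definition Qf :: "real^'d^'d \<Rightarrow> real^'d \<Rightarrow> real" where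
  "Qf M w = w \<bullet> (M *v w)"

definition symm :: "real^'d^'d \<Rightarrow> bool" where
  "symm M \<longleftrightarrow> (\<forall>i j. M$i$j = M$j$i)"

lemma symm_inner: assumes "symm M" shows "w \<bullet> (M *v u) = u \<bullet> (M *v w)"
proof -
  have "w \<bullet> (M *v u) = (\<Sum>i\<in>UNIV. \<Sum>j\<in>UNIV. w$i * M$i$j * u$j)"
    by (simp add: inner_vec_def matrix_vector_mult_def sum_distrib_left mult.assoc)
  also have "\<dots> = (\<Sum>j\<in>UNIV. \<Sum>i\<in>UNIV. w$i * M$i$j * u$j)" by (rule sum.swap)
  also have "\<dots> = u \<bullet> (M *v w)"
    using assms by (simp add: symm_def inner_vec_def matrix_vector_mult_def sum_distrib_left mult_ac)
  finally show ?thesis .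
qed

lemma Qf_add: "Qf (A + B) w = Qf A w + Qf B w"
  by (simp add: Qf_def matrix_vector_mult_add_rdistrib inner_add_right)

lemma Qf_scale: "Qf (c *\<^sub>R A) w = c * Qf A w"
  by (simp add: Qf_def scaleR_matrix_vector_assoc[symmetric])

lemma Qf_id: "Qf (mat 1) w = w \<bullet> w"
  by (simp add: Qf_def)

lemma Qf_sum: "Qf (sum f I) w = (\<Sum>i\<in>I. Qf (f i) w)"
  by (induction I rule: infinite_finite_induct) (auto simp: Qf_add[unfolded Qf_def] Qf_def)

lemma outer_mult: "outer y *v w = (y \<bullet> w) *\<^sub>R y"
  by (simp add: outer_def vec_eq_iff matrix_vector_mult_def inner_vec_def sum_distrib_left mult_ac)

lemma Qf_outer: "Qf (outer y) w = (w \<bullet> y)^2"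
  by (simp add: Qf_def outer_mult power2_eq_square inner_commute)

lemma symm_add: "symm A \<Longrightarrow> symm B \<Longrightarrow> symm (A + B)" by (simp add: symm_def)
lemma symm_scale: "symm A \<Longrightarrow> symm (c *\<^sub>R A)" by (simp add: symm_def)
lemma symm_id: "symm (mat 1)" by (simp add: symm_def mat_def)
lemma symm_outer: "symm (outer y)" by (simp add: symm_def outer_def mult.commute)
lemma symm_sum: "(\<And>i. i \<in> I \<Longrightarrow> symm (f i)) \<Longrightarrow> symm (sum f I)"
  by (induction I rule: infinite_finite_induct) (auto simp: symm_def)

lemma pd_invertible:
  assumes "\<forall>w. w \<noteq> 0 \<longrightarrow> Qf M w > 0"
  shows "M ** matrix_inv M = mat 1" "matrix_inv M ** M = mat 1"
proof -
  have "\<forall>x. M *v x = 0 \<longrightarrow> x = 0"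
    using assms by (metis Qf_def inner_zero_right less_irrefl)
  then obtain B where B: "B ** M = mat 1" using matrix_left_invertible_ker by blast
  then have "M ** B = mat 1" using matrix_left_right_inverse by blast
  with B have "\<exists>A'. M ** A' = mat 1 \<and> A' ** M = mat 1" by blast
  then have "M ** matrix_inv M = mat 1 \<and> matrix_inv M ** M = mat 1"
    unfolding matrix_inv_def by (rule someI_ex)
  then show "M ** matrix_inv M = mat 1" "matrix_inv M ** M = mat 1" by auto
qed

lemma variational:
  assumes "symm M" "\<forall>w. w \<noteq> 0 \<longrightarrow> Qf M w > 0"
  shows "2 * (w \<bullet> v) - Qf M w \<le> v \<bullet> (matrix_inv M *v v)"
    "v \<bullet> (matrix_inv M *v v) = 2 * ((matrix_inv M *v v) \<bullet> v) - Qf M (matrix_inv M *v v)"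
proof -
  define u where "u = matrix_inv M *v v"
  have Mu: "M *v u = v" using pd_invertible(1)[OF assms(2)]
    by (simp add: u_def matrix_vector_mul_assoc)
  have "0 \<le> Qf M (w - u)" using assms(2)
    by (metis Qf_def inner_zero_left less_eq_real_def matrix_vector_mult_0_right)
  also have "Qf M (w - u) = Qf M w - 2 * (w \<bullet> v) + u \<bullet> v"
    using symm_inner[OF assms(1), of u w] Mu
    by (simp add: Qf_def matrix_vector_mult_diff_distrib inner_diff_left inner_diff_right inner_commute)
  finally show "2 * (w \<bullet> v) - Qf M w \<le> v \<bullet> (matrix_inv M *v v)"
    by (simp add: u_def inner_commute)
  show "v \<bullet> (matrix_inv M *v v) = 2 * ((matrix_inv M *v v) \<bullet> v) - Qf M (matrix_inv M *v v)"
    using Mu by (simp add: u_def[symmetric] Qf_def inner_commute)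
qed

lemma compare_inv:
  assumes "symm M1" "symm M2" "\<forall>w. w \<noteq> 0 \<longrightarrow> Qf M2 w > 0" "\<forall>w. Qf M2 w \<le> Qf M1 w"
  shows "v \<bullet> (matrix_inv M1 *v v) \<le> v \<bullet> (matrix_inv M2 *v v)"
proof -
  have pd1: "\<forall>w. w \<noteq> 0 \<longrightarrow> Qf M1 w > 0" using assms(3,4) by (meson less_le_trans)
  define u where "u = matrix_inv M1 *v v"
  have "v \<bullet> (matrix_inv M1 *v v) = 2 * (u \<bullet> v) - Qf M1 u"
    using variational(2)[OF assms(1) pd1] u_def by simp
  also have "\<dots> \<le> 2 * (u \<bullet> v) - Qf M2 u" using assms(4) by simp
  also have "\<dots> \<le> v \<bullet> (matrix_inv M2 *v v)" by (rule variational(1)[OF assms(2,3)])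
  finally show ?thesis .
qed

lemma pd_shift:
  assumes "\<forall>w. 0 \<le> Qf M w" "(l::real) > 0"
  shows "\<forall>w. w \<noteq> 0 \<longrightarrow> Qf (M + l *\<^sub>R mat 1) w > 0"
  using assms by (auto simp: Qf_add Qf_scale Qf_id add_nonneg_pos)

lemma norm_inv_SUP:
  fixes M :: "real^'d^'d"
  assumes "symm M" "\<forall>w. 0 \<le> Qf M w"
  shows "norm_inv M v = (SUP l\<in>{0<..}. ereal (sqrt (v \<bullet> (matrix_inv (M + l *\<^sub>R mat 1) *v v))))"
proof -
  define f where "f = (\<lambda>l::real. ereal (sqrt (v \<bullet> (matrix_inv (M + l *\<^sub>R mat 1) *v v))))"
  define S where "S = (SUP l\<in>{0<..}. f l)"
  have anti: "f l2 \<le> f l1" if "0 < l1" "l1 \<le> l2" for l1 l2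
  proof -
    have "v \<bullet> (matrix_inv (M + l2 *\<^sub>R mat 1) *v v) \<le> v \<bullet> (matrix_inv (M + l1 *\<^sub>R mat 1) *v v)"
      apply (rule compare_inv)
      using assms that pd_shift[OF assms(2), of l1]
      by (auto simp: symm_add symm_scale symm_id Qf_add Qf_scale Qf_id intro!: mult_right_mono)
    then show ?thesis unfolding f_def by simp
  qed
  have "(f \<longlongrightarrow> S) (at_right 0)"
  proof (rule order_tendstoI)
    fix a assume "a < S"
    then obtain l0 where l0: "l0 > 0" "a < f l0" unfolding S_def by (auto simp: less_SUP_iff)
    have "eventually (\<lambda>l. l \<in> {0<..<l0}) (at_right 0)" using eventually_at_right_real l0 by blast
    then show "eventually (\<lambda>l. a < f l) (at_right 0)"
      by eventually_elim (use l0 anti in \<open>auto intro: less_le_trans\<close>)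
  next
    fix a assume "S < a"
    have "eventually (\<lambda>l. 0 < l) (at_right (0::real))" by (rule eventually_at_right_less)
    then show "eventually (\<lambda>l. f l < a) (at_right 0)"
      proof eventually_elim
      case (elim l)
      then have "f l \<le> S" unfolding S_def by (intro SUP_upper) auto
      then show ?case using \<open>S < a\<close> by (rule le_less_trans)
    qed
  qed
  then have "Lim (at_right 0) f = S" by (intro tendsto_Lim) auto
  then show ?thesis unfolding norm_inv_def f_def S_def by simp
qed

lemma Qf_cov: "Qf (Sigma_cov K x p) w = (\<Sum>i=1..K. p i * (w \<bullet> (x i - xbar K x p))^2)"
  by (simp add: Sigma_cov_def Qf_sum Qf_scale Qf_outer)

lemma Qf_m1: "Qf (Sigma_m1 K x p) w = (\<Sum>i=1..K. p i * (w \<bullet> (x i - x 1))^2)"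
  by (simp add: Sigma_m1_def Qf_sum Qf_scale Qf_outer)

lemma symm_cov: "symm (Sigma_cov K x p)"
  unfolding Sigma_cov_def by (intro symm_sum symm_scale symm_outer)

lemma symm_m1: "symm (Sigma_m1 K x p)"
  unfolding Sigma_m1_def by (intro symm_sum symm_scale symm_outer)

lemma key_ineq:
  assumes "pt \<in> prob_simplex K" "pt 1 = 0"
  shows "Qf (Sigma_m1 K x pt) w / 4 \<le> Qf (Sigma_cov K x (p_xor pt)) w"
proof -
  let ?I = "{1..K}"
  define q where "q = p_xor pt"
  define a where "a i = w \<bullet> (x i - x 1)" for i
  have sp: "(\<Sum>i\<in>?I. pt i) = 1" "\<forall>i\<in>?I. 0 \<le> pt i" using assms(1) by (auto simp: prob_simplex_def)
  have K1: "1 \<in> ?I" using sp(1) by (cases "K = 0") auto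
  have qe: "q i = pt i / 2 + (if i = 1 then 1/2 else 0)" for i
    using assms(2) by (simp add: q_def p_xor_def)
  have a1: "a 1 = 0" by (simp add: a_def)
  define m where "m = (\<Sum>i\<in>?I. pt i * a i)"
  define P where "P = (\<Sum>i\<in>?I. pt i * (a i)^2)"
  have dl: "(\<Sum>i\<in>?I. (if i = 1 then (1/2::real) else 0) * f i) = f 1 / 2" for f :: "nat \<Rightarrow> real"
  proof -
    have "(\<Sum>i\<in>?I. (if i = 1 then (1/2::real) else 0) * f i) = (\<Sum>i\<in>?I. if i = 1 then f i / 2 else 0)"
      by (intro sum.cong) auto
    also have "\<dots> = f 1 / 2" using K1 by (simp add: sum.delta)
    finally show ?thesis .
  qed
  have qs: "(\<Sum>i\<in>?I. q i * f i) = (\<Sum>i\<in>?I. pt i * f i) / 2 + f 1 / 2" for f :: "nat \<Rightarrow> real"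
  proof -
    have "(\<Sum>i\<in>?I. q i * f i) = (\<Sum>i\<in>?I. (pt i * f i) / 2 + (if i = 1 then (1/2::real) else 0) * f i)"
      unfolding qe by (intro sum.cong) (auto simp: algebra_simps)
    also have "\<dots> = (\<Sum>i\<in>?I. pt i * f i) / 2 + f 1 / 2"
      by (simp only: sum.distrib dl sum_divide_distrib[symmetric])
    finally show ?thesis .
  qed
  have sq: "(\<Sum>i\<in>?I. q i) = 1"
    using qs[of "\<lambda>_. 1"] sp(1) by simp
  have sqa: "(\<Sum>i\<in>?I. q i * a i) = m / 2"
    using qs[of a] a1 by (simp add: m_def)
  have sqa2: "(\<Sum>i\<in>?I. q i * (a i)^2) = P / 2"
    using qs[of "\<lambda>i. (a i)^2"] a1 by (simp add: P_def)
  have xb: "xbar K x q - x 1 = (\<Sum>i\<in>?I. q i *\<^sub>R (x i - x 1))"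
  proof -
    have "(\<Sum>i\<in>?I. q i *\<^sub>R (x i - x 1)) = (\<Sum>i\<in>?I. q i *\<^sub>R x i) - (\<Sum>i\<in>?I. q i) *\<^sub>R x 1"
      by (simp add: scaleR_diff_right sum_subtractf scaleR_sum_left)
    then show ?thesis using sq by (simp add: xbar_def)
  qed
  define c where "c = m / 2"
  have wd: "w \<bullet> (x i - xbar K x q) = a i - c" for i
  proof -
    have "x i - xbar K x q = (x i - x 1) - (xbar K x q - x 1)" by simp
    then have "w \<bullet> (x i - xbar K x q) = a i - w \<bullet> (xbar K x q - x 1)"
      by (simp add: a_def inner_diff_right)
    also have "w \<bullet> (xbar K x q - x 1) = c"
      unfolding xb c_def sqa[symmetric] by (simp add: inner_sum_right a_def)
    finally show ?thesis .
  qed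
  have "Qf (Sigma_cov K x q) w = (\<Sum>i\<in>?I. q i * (a i)^2 - 2 * c * (q i * a i) + c^2 * q i)"
    unfolding Qf_cov wd by (intro sum.cong) (auto simp: power2_diff algebra_simps)
  also have "\<dots> = P/2 - 2 * c * (m/2) + c^2"
    unfolding sum.distrib sum_subtractf sum_distrib_left[symmetric] sq sqa sqa2 by simp
  finally have QC: "Qf (Sigma_cov K x q) w = P/2 - m^2/4" by (simp add: c_def power2_eq_square)
  have QS: "Qf (Sigma_m1 K x pt) w = P" by (simp add: Qf_m1 P_def a_def)
  have "0 \<le> (\<Sum>i\<in>?I. pt i * (a i - m)^2)"
    using sp(2) by (intro sum_nonneg) auto
  also have "(\<Sum>i\<in>?I. pt i * (a i - m)^2) = (\<Sum>i\<in>?I. pt i * (a i)^2 - 2 * m * (pt i * a i) + m^2 * pt i)"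
    by (intro sum.cong) (auto simp: power2_diff algebra_simps)
  also have "\<dots> = P - m^2"
    unfolding sum.distrib sum_subtractf sum_distrib_left[symmetric] sp(1) P_def[symmetric] m_def[symmetric] by (simp add: power2_eq_square)
  finally show ?thesis using QC QS q_def by simp
qed

lemma psd_cov: "\<forall>i\<in>{1..K}. 0 \<le> p i \<Longrightarrow> \<forall>w. 0 \<le> Qf (Sigma_cov K x p) w"
  by (auto simp: Qf_cov intro!: sum_nonneg)

lemma psd_m1: "\<forall>i\<in>{1..K}. 0 \<le> p i \<Longrightarrow> \<forall>w. 0 \<le> Qf (Sigma_m1 K x p) w"
  by (auto simp: Qf_m1 intro!: sum_nonneg)

lemma norm_compare:
  assumes "pt \<in> prob_simplex K" "pt 1 = 0"
  shows "norm_inv (Sigma_cov K x (p_xor pt)) v \<le> 2 * norm_inv (Sigma_m1 K x pt) v"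
proof -
  define C where "C = Sigma_cov K x (p_xor pt)"
  define S where "S = Sigma_m1 K x pt"
  have ptn: "\<forall>i\<in>{1..K}. 0 \<le> pt i" using assms(1) by (auto simp: prob_simplex_def)
  then have qn: "\<forall>i\<in>{1..K}. 0 \<le> p_xor pt i" by (auto simp: p_xor_def)
  have psdC: "\<forall>w. 0 \<le> Qf C w" unfolding C_def using psd_cov[OF qn] .
  have psdS: "\<forall>w. 0 \<le> Qf S w" unfolding S_def using psd_m1[OF ptn] .
  have key: "Qf S w / 4 \<le> Qf C w" for w unfolding C_def S_def using key_ineq[OF assms] .
  define fS where "fS = (\<lambda>l::real. ereal (sqrt (v \<bullet> (matrix_inv (S + l *\<^sub>R mat 1) *v v))))"
  have nS: "norm_inv S v = (SUP l\<in>{0<..}. fS l)" unfolding fS_def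
    by (rule norm_inv_SUP[OF _ psdS]) (simp add: S_def symm_m1)
  have nC: "norm_inv C v = (SUP l\<in>{0<..}. ereal (sqrt (v \<bullet> (matrix_inv (C + l *\<^sub>R mat 1) *v v))))"
    by (rule norm_inv_SUP[OF _ psdC]) (simp add: C_def symm_cov)
  have "ereal (sqrt (v \<bullet> (matrix_inv (C + l *\<^sub>R mat 1) *v v))) \<le> 2 * norm_inv S v" if l: "l > 0" for l
  proof -
    define u where "u = matrix_inv (C + l *\<^sub>R mat 1) *v v"
    have sC: "symm (C + l *\<^sub>R mat 1)" by (simp add: C_def symm_cov symm_add symm_scale symm_id)
    have sS: "symm (S + (4*l) *\<^sub>R mat 1)" by (simp add: S_def symm_m1 symm_add symm_scale symm_id)
    have pC: "\<forall>w. w \<noteq> 0 \<longrightarrow> Qf (C + l *\<^sub>R mat 1) w > 0" using pd_shift[OF psdC l] .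
    have pS: "\<forall>w. w \<noteq> 0 \<longrightarrow> Qf (S + (4*l) *\<^sub>R mat 1) w > 0" using pd_shift[OF psdS] l by simp
    have "v \<bullet> (matrix_inv (C + l *\<^sub>R mat 1) *v v) = 2 * (u \<bullet> v) - Qf (C + l *\<^sub>R mat 1) u"
      using variational(2)[OF sC pC] u_def by simp
    also have "\<dots> \<le> 2 * (u \<bullet> v) - (Qf S u / 4 + l * (u \<bullet> u))"
      using key[of u] by (simp add: Qf_add Qf_scale Qf_id)
    also have "\<dots> = 4 * (2 * ((u /\<^sub>R 4) \<bullet> v) - Qf (S + (4*l) *\<^sub>R mat 1) (u /\<^sub>R 4))"
      by (simp add: Qf_add Qf_scale Qf_id Qf_def scaleR_matrix_vector_assoc[symmetric] algebra_simps)
    also have "\<dots> \<le> 4 * (v \<bullet> (matrix_inv (S + (4*l) *\<^sub>R mat 1) *v v))"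
      by (rule mult_left_mono) (use variational(1)[OF sS pS, of "u /\<^sub>R 4" v] in auto)
    finally have le: "v \<bullet> (matrix_inv (C + l *\<^sub>R mat 1) *v v) \<le> 4 * (v \<bullet> (matrix_inv (S + (4*l) *\<^sub>R mat 1) *v v))" .
    have "sqrt (v \<bullet> (matrix_inv (C + l *\<^sub>R mat 1) *v v)) \<le> sqrt (4 * (v \<bullet> (matrix_inv (S + (4*l) *\<^sub>R mat 1) *v v)))"
      using le by simp
    also have "\<dots> = 2 * sqrt (v \<bullet> (matrix_inv (S + (4*l) *\<^sub>R mat 1) *v v))"
      by (simp add: real_sqrt_mult)
    finally have "ereal (sqrt (v \<bullet> (matrix_inv (C + l *\<^sub>R mat 1) *v v))) \<le> 2 * fS (4*l)"
      unfolding fS_def by simp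
    also have "fS (4*l) \<le> norm_inv S v" unfolding nS using l by (intro SUP_upper) auto
    then have "2 * fS (4*l) \<le> 2 * norm_inv S v" by (intro ereal_mult_left_mono) auto
    finally show ?thesis .
  qed
  then show ?thesis unfolding nC C_def[symmetric] S_def[symmetric] by (intro SUP_least) auto
qed

lemma norm_inv_nonneg:
  assumes "symm M" "\<forall>w. 0 \<le> Qf M w"
  shows "0 \<le> norm_inv M v"
proof -
  have "ereal (sqrt (v \<bullet> (matrix_inv (M + 1 *\<^sub>R mat 1) *v v))) \<le> norm_inv M v"
    unfolding norm_inv_SUP[OF assms] by (intro SUP_upper) auto
  moreover have "0 \<le> v \<bullet> (matrix_inv (M + 1 *\<^sub>R mat 1) *v v)"
  proof -
    have "2 * (0 \<bullet> v) - Qf (M + 1 *\<^sub>R mat 1) 0 \<le> v \<bullet> (matrix_inv (M + 1 *\<^sub>R mat 1) *v v)"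
      by (rule variational(1)) (use assms pd_shift[OF assms(2), of 1] in \<open>auto simp: symm_add symm_scale symm_id\<close>)
    then show ?thesis by (simp add: Qf_def)
  qed
  ultimately show ?thesis by (meson ereal_less_eq(5) order_trans real_sqrt_ge_zero)
qed

lemma ereal_sq_mono: "0 \<le> a \<Longrightarrow> a \<le> (b::ereal) \<Longrightarrow> a^2 \<le> b^2"
  by (cases a; cases b) (auto simp: power2_eq_square mult_mono)

theorem mainTheorem4:
  fixes A :: "(real^'d) set" and K :: nat and x :: "nat \<Rightarrow> real^'d" and pt :: "nat \<Rightarrow> real"
  assumes "finite A"
    and "pt \<in> prob_simplex K"
    and "pt 1 = 0"
    and "\<forall>p\<in>prob_simplex K. V_lin_obj A K x pt \<le> V_lin_obj A K x p"
  shows "V_cov A K x (p_xor pt) \<le> 4 * V_lin_star A K x"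
proof -
  have star: "V_lin_star A K x = V_lin_obj A K x pt"
    unfolding V_lin_star_def
    by (rule antisym) (use assms(2,4) in \<open>auto intro: INF_lower INF_greatest\<close>)
  have ptn: "\<forall>i\<in>{1..K}. 0 \<le> pt i" using assms(2) by (auto simp: prob_simplex_def)
  then have qn: "\<forall>i\<in>{1..K}. 0 \<le> p_xor pt i" by (auto simp: p_xor_def)
  have "(norm_inv (Sigma_cov K x (p_xor pt)) v)^2 \<le> 4 * (norm_inv (Sigma_m1 K x pt) v)^2" for v
  proof -
    have a0: "0 \<le> norm_inv (Sigma_cov K x (p_xor pt)) v"
      by (rule norm_inv_nonneg[OF symm_cov psd_cov[OF qn]])
    have "(norm_inv (Sigma_cov K x (p_xor pt)) v)^2 \<le> (2 * norm_inv (Sigma_m1 K x pt) v)^2"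
      by (rule ereal_sq_mono[OF a0 norm_compare[OF assms(2,3)]])
    also have "\<dots> = 4 * (norm_inv (Sigma_m1 K x pt) v)^2"
      by (simp add: power_mult_distrib)
    finally show ?thesis .
  qed
  also have "4 * (norm_inv (Sigma_m1 K x pt) (fst uu - snd uu))^2 \<le> 4 * V_lin_obj A K x pt" if "uu \<in> A \<times> A" for uu
    unfolding V_lin_obj_def by (intro ereal_mult_left_mono SUP_upper that) auto
  ultimately show ?thesis
    unfolding star V_cov_def by (intro SUP_least) (meson order_trans)
qed

end
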